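(* Define for integers $N\ge1$ $$\theta_1(N) = \frac{2^{\omega(N)}\sqrt{N}}{\psi(N)},\quad \theta_2(N) = \frac{(2^{\omega(N)})^2}{\psi(N)},\quad \theta_3(N)=\frac{2^{\omega(N)}}{\psi(N)}.$$ Then $\theta_i(N)\to 0$ as $N\to\infty$ for $i=1,2,3$. Moreover, for all $N$ at least the given threshold, the following bounds hold: $N\ge 1$: $\theta_1\le 1.00$, $\theta_2\le 1.34$, $\theta_3\le 1.00$; $N\ge 43$: $\theta_1\le 0.465$, $\theta_2\le 0.445$, $\theta_3\le 0.0556$; $N\ge 571$: $\theta_1\le 0.257$, $\theta_2\le 0.149$, $\theta_3\le 0.00926$; $N\ge 8800$: $\theta_1\le 0.133$, $\theta_2\le 0.0424$, $\theta_3\le 0.00133$; $N\ge 150000$: $\theta_1\le 0.0607$, $\theta_2\le 0.00941$, $\theta_3\le 0.000147$; $N\ge 2700000$: $\theta_1\le 0.0265$, $\theta_2\le 0.00189$, $\theta_3\le 0.000015$; $N\ge 63000000$: $\theta_1\le 0.0106$, $\theta_2\le 0.000314$, $\theta_3\le 0.000015$.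
   Context: $\psi(N) = N\prod_{p\mid N}(1+1/p)$ (product over primes dividing $N$), the index of $\Gamma_0(N)$ in $\mathrm{SL}_2(\mathbb{Z})$; $\omega(N)$ is the number of distinct prime divisors of $N$. *)

theory Defs
  imports "HOL-Analysis.Analysis" "HOL-Computational_Algebra.Primes"
begin

definition omega :: "nat \<Rightarrow> nat" where
  "omega N = card (prime_factors N)"

definition psi :: "nat \<Rightarrow> real" where
  "psi N = real N * (\<Prod>p\<in>prime_factors N. (1 + 1 / real p))"

definition theta1 :: "nat \<Rightarrow> real" where
  "theta1 N = 2 ^ omega N * sqrt (real N) / psi N"

definition theta2 :: "nat \<Rightarrow> real" where
  "theta2 N = (2 ^ omega N) ^ 2 / psi N"

definition theta3 :: "nat \<Rightarrow> real" where
  "theta3 N = 2 ^ omega N / psi N"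

end

theory Submission
  imports Defs
begin


definition PP :: "nat \<Rightarrow> real" where
  "PP M = (\<Prod>p\<in>prime_factors M. 1 + 1 / real p)"

definition GG :: "nat \<Rightarrow> nat \<Rightarrow> nat \<Rightarrow> real" where
  "GG K e M = real K ^ card (prime_factors M) / (real M * PP M ^ e)"

lemma PP_ge1: "PP M \<ge> 1"
  unfolding PP_def by (rule prod_ge_1) auto

lemma PP_pos: "PP M > 0"
  using PP_ge1[of M] by linarith

lemma prod_pf_le: fixes M :: nat assumes "0 < M" shows "(\<Prod>p\<in>prime_factors M. p) \<le> M"
proof -
  have "(\<Prod>p\<in>prime_factors M. p) \<le> (\<Prod>p\<in>prime_factors M. p ^ multiplicity p M)"
  proof (rule prod_mono)
    fix p assume p: "p \<in> prime_factors M"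
    then have "multiplicity p M \<ge> 1" using assms
      by (simp add: prime_factors_multiplicity)
    moreover have "p \<ge> 1" using p by (auto dest: in_prime_factors_imp_prime simp: prime_gt_0_nat Suc_leI)
    ultimately show "0 \<le> p \<and> p \<le> p ^ multiplicity p M"
      by (metis One_nat_def le_less_trans less_one not_less power_increasing power_one_right zero_le)
  qed
  also have "\<dots> = M" using prime_factorization_nat[OF assms] by simp
  finally show ?thesis .
qed

lemma psi_ge: assumes "0 < M"
  shows "(\<Prod>p\<in>prime_factors M. real p + 1) \<le> real M * PP M"
proof -
  have "(\<Prod>p\<in>prime_factors M. real p + 1) = (\<Prod>p\<in>prime_factors M. real p * (1 + 1 / real p))"
    by (rule prod.cong) (auto simp: field_simps dest!: in_prime_factors_imp_prime prime_gt_0_nat)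
  also have "\<dots> = real (\<Prod>p\<in>prime_factors M. p) * PP M"
    by (simp add: PP_def prod.distrib)
  also have "\<dots> \<le> real M * PP M"
    using prod_pf_le[OF assms] PP_ge1[of M] by (intro mult_right_mono) (auto simp flip: of_nat_prod)
  finally show ?thesis .
qed

lemma GG_le: assumes "0 < M" "1 \<le> e"
  shows "GG K e M \<le> real K ^ card (prime_factors M) / (real M * PP M)"
proof -
  have "PP M \<le> PP M ^ e" using PP_ge1[of M] assms(2)
    by (metis One_nat_def power_increasing power_one_right)
  then show ?thesis unfolding GG_def using assms PP_pos[of M]
    by (intro divide_left_mono) (auto intro!: mult_left_mono mult_pos_pos)
qed

lemma GG_le2: assumes "0 < M" "1 \<le> e"
  shows "GG K e M \<le> real K ^ card (prime_factors M) / (\<Prod>p\<in>prime_factors M. real p + 1)"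
proof -
  have pos: "0 < (\<Prod>p\<in>prime_factors M. real p + 1)"
    by (rule prod_pos) auto
  have "GG K e M \<le> real K ^ card (prime_factors M) / (real M * PP M)" by (rule GG_le[OF assms])
  also have "\<dots> \<le> real K ^ card (prime_factors M) / (\<Prod>p\<in>prime_factors M. real p + 1)"
    using psi_ge[OF assms(1)] pos by (intro divide_left_mono) auto
  finally show ?thesis .
qed

lemma GG_nonneg: "0 \<le> GG K e M"
  unfolding GG_def using PP_pos[of M] by auto

lemma GG_le_1: assumes "0 < M" "1 \<le> e" "\<forall>p\<in>prime_factors M. K \<le> p + 1"
  shows "GG K e M \<le> 1"
proof -
  have pos: "0 < (\<Prod>p\<in>prime_factors M. real p + 1)"
    by (rule prod_pos) auto
  have "real K ^ card (prime_factors M) = (\<Prod>p\<in>prime_factors M. real K)" by simp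
  also have "\<dots> \<le> (\<Prod>p\<in>prime_factors M. real p + 1)"
    using assms(3) by (intro prod_mono) auto
  finally have "real K ^ card (prime_factors M) / (\<Prod>p\<in>prime_factors M. real p + 1) \<le> 1"
    using pos by simp
  with GG_le2[OF assms(1,2), of K] show ?thesis by linarith
qed

lemma pf_prime_power: "prime (q::nat) \<Longrightarrow> 0 < a \<Longrightarrow> prime_factors (q ^ a) = {q}"
  by (auto simp: in_prime_factors_iff prime_dvd_power_iff primes_dvd_imp_eq prime_gt_0_nat)

lemma GG_decomp:
  assumes q: "prime q" and M: "0 < M" and nd: "\<not> q dvd M" and a: "0 < a"
  shows "GG K e (q ^ a * M) = (real K * real q ^ e / (real q ^ a * (real q + 1) ^ e)) * GG K e M"
proof -
  have q0: "q > 0" using q prime_gt_0_nat by blast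
  have pf: "prime_factors (q ^ a * M) = insert q (prime_factors M)"
    using prime_factors_product[of "q^a" M] pf_prime_power[OF q a] M q0 by auto
  have qn: "q \<notin> prime_factors M" using nd by auto
  have card: "card (prime_factors (q ^ a * M)) = Suc (card (prime_factors M))"
    using pf qn by simp
  have PPe: "PP (q ^ a * M) = (1 + 1 / real q) * PP M"
    unfolding PP_def pf using qn by simp
  have e1: "(1 + 1 / real q) = (real q + 1) / real q" using q0 by (simp add: field_simps)
  have "GG K e (q ^ a * M) = real K * real K ^ card (prime_factors M) /
      (real q ^ a * real M * (((real q + 1) / real q) ^ e * PP M ^ e))"
    unfolding GG_def card PPe e1 power_mult_distrib by (simp add: mult_ac)
  also have "\<dots> = (real K * real q ^ e / (real q ^ a * (real q + 1) ^ e)) * GG K e M"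
    unfolding GG_def using q0 M PP_pos[of M] by (simp add: power_divide field_simps)
  finally show ?thesis .
qed



datatype cert = L1 | L3 nat | Br "cert list"

fun consec :: "nat list \<Rightarrow> bool" where
  "consec [] = True"
| "consec [p] = prime p"
| "consec (p # q # r) = (prime p \<and> p < q \<and> (\<forall>x\<in>set [Suc p..<q]. \<not> prime x) \<and> consec (q # r))"

fun chk :: "nat \<Rightarrow> nat \<Rightarrow> nat \<Rightarrow> cert \<Rightarrow> nat list \<Rightarrow> nat \<Rightarrow> nat \<Rightarrow> nat \<Rightarrow> nat \<Rightarrow> bool"
and chks :: "nat \<Rightarrow> nat \<Rightarrow> nat \<Rightarrow> cert list \<Rightarrow> nat list \<Rightarrow> nat \<Rightarrow> nat \<Rightarrow> nat \<Rightarrow> nat \<Rightarrow> nat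
             \<Rightarrow> nat \<Rightarrow> nat \<Rightarrow> nat \<Rightarrow> nat \<Rightarrow> nat \<Rightarrow> nat \<Rightarrow> bool" where
  "chk K e T c [] A B D N0 = False"
| "chk K e T L1 (q # ps) A B D N0 = (K \<le> q + 1 \<and> A \<le> B)"
| "chk K e T (L3 j) (q # ps) A B D N0 = (K \<le> q + 1 \<and> N0 < T \<and> 1 \<le> j \<and> j \<le> Suc (length ps) \<and>
      (j = 1 \<or> A * K ^ (j - 1) \<le> D) \<and> A * K ^ j \<le> B * prod_list (map Suc (take j (q # ps))))"
| "chk K e T (Br cs) (q # ps) A B D N0 = (cs \<noteq> [] \<and> ps \<noteq> [] \<and>
      chks K e T cs ps q A B D N0 (A * K * q ^ e) (D * Suc q ^ e) (Suc q ^ e) 0 B N0)"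
| "chks K e T [] ps q A B D N0 A1 D1 E a Bq Nq = (0 < a \<and> A1 \<le> Bq * E)"
| "chks K e T (c # cs) ps q A B D N0 A1 D1 E a Bq Nq =
     ((if a = 0 then chk K e T c ps A B D N0 else chk K e T c ps A1 (Bq * E) D1 Nq) \<and>
      chks K e T cs ps q A B D N0 A1 D1 E (Suc a) (Bq * q) (Nq * q))"



lemma consec_tl: "consec (q # ps) \<Longrightarrow> consec ps"
  by (cases ps) auto

lemma consec_hd_prime: "consec (q # ps) \<Longrightarrow> prime q"
  by (cases ps) auto

lemma consec_next: "consec (q # q' # r) \<Longrightarrow> prime p \<Longrightarrow> q < p \<Longrightarrow> q' \<le> p"
  by (rule ccontr) auto

lemma consec_lt: "consec (q # q' # r) \<Longrightarrow> q < q'"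
  by auto

lemma base_bound:
  assumes "finite S" "\<forall>p\<in>S. q \<le> p"
  shows "(real q + 1) ^ card S \<le> (\<Prod>p\<in>S. real p + 1)"
proof -
  have "(real q + 1) ^ card S = (\<Prod>p\<in>S. real q + 1)" by simp
  also have "\<dots> \<le> (\<Prod>p\<in>S. real p + 1)"
    using assms(2) by (intro prod_mono) auto
  finally show ?thesis .
qed

lemma pi_bound:
  "consec L \<Longrightarrow> L \<noteq> [] \<Longrightarrow> finite S \<Longrightarrow> (\<forall>p\<in>S. prime p \<and> hd L \<le> p) \<Longrightarrow>
   n \<le> length L \<Longrightarrow> n \<le> card S \<Longrightarrow>
   real (prod_list (map Suc (take n L))) * (real (hd L) + 1) ^ (card S - n) \<le> (\<Prod>p\<in>S. real p + 1)"
proof (induction n arbitrary: L S)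
  case 0
  then show ?case using base_bound[of S "hd L"] by auto
next
  case (Suc n)
  obtain q L' where L: "L = q # L'" using Suc.prems(2) by (cases L) auto
  have "S \<noteq> {}" using Suc.prems(6) by auto
  define s where "s = Min S"
  have sS: "s \<in> S" using Suc.prems(3) \<open>S \<noteq> {}\<close> s_def by simp
  have smin: "\<forall>p\<in>S. s \<le> p" using Suc.prems(3) s_def by simp
  define S' where "S' = S - {s}"
  have cardS': "card S' = card S - 1" using sS Suc.prems(3) S'_def by simp
  have fS': "finite S'" using Suc.prems(3) S'_def by simp
  have prodS: "(\<Prod>p\<in>S. real p + 1) = (real s + 1) * (\<Prod>p\<in>S'. real p + 1)"
    using sS Suc.prems(3) S'_def by (simp add: prod.remove)
  have qs: "q \<le> s" using Suc.prems(4) sS L by auto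
  show ?case
  proof (cases "n = 0")
    case True
    have b: "(real q + 1) ^ card S \<le> (\<Prod>p\<in>S. real p + 1)"
      using base_bound[of S q] Suc.prems(3,4) L by auto
    obtain k where k: "card S = Suc k" using Suc.prems(6) by (cases "card S") auto
    have "real (prod_list (map Suc (take (Suc n) L))) * (real (hd L) + 1) ^ (card S - Suc n)
          = (real q + 1) ^ card S"
      using True L k by simp
    then show ?thesis using b by simp
  next
    case False
    then have "L' \<noteq> []" using Suc.prems(5) L by auto
    then obtain q' r where L': "L' = q' # r" by (cases L') auto
    have cL': "consec L'" using Suc.prems(1) L consec_tl by blast
    have S'ge: "\<forall>p\<in>S'. prime p \<and> hd L' \<le> p"
    proof
      fix p assume p: "p \<in> S'"
      then have "p \<in> S" "p \<noteq> s" using S'_def by auto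
      then have "s < p" using smin by force
      then have "q < p" using qs by simp
      moreover have "prime p" using \<open>p \<in> S\<close> Suc.prems(4) by auto
      ultimately show "prime p \<and> hd L' \<le> p"
        using consec_next[of q q' r p] Suc.prems(1) L L' by auto
    qed
    have IH: "real (prod_list (map Suc (take n L'))) * (real (hd L') + 1) ^ (card S' - n)
              \<le> (\<Prod>p\<in>S'. real p + 1)"
      using Suc.IH[OF cL' \<open>L' \<noteq> []\<close> fS' S'ge] Suc.prems(5,6) L cardS' by auto
    have qq': "real q + 1 \<le> real (hd L') + 1" using consec_lt[of q q' r] Suc.prems(1) L L' by simp
    have ex: "card S - Suc n = card S' - n" using cardS' by simp
    have "real (prod_list (map Suc (take (Suc n) L))) * (real (hd L) + 1) ^ (card S - Suc n)
        = (real q + 1) * (real (prod_list (map Suc (take n L'))) * (real q + 1) ^ (card S' - n))"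
      using L ex by (simp add: algebra_simps)
    also have "\<dots> \<le> (real s + 1) * (real (prod_list (map Suc (take n L'))) * (real (hd L') + 1) ^ (card S' - n))"
      using qs qq' by (intro mult_mono power_mono) auto
    also have "\<dots> \<le> (real s + 1) * (\<Prod>p\<in>S'. real p + 1)"
      using IH by (intro mult_left_mono) auto
    finally show ?thesis using prodS by simp
  qed
qed



lemma prod_list_Suc_pos: "0 < prod_list (map Suc xs)"
  by (induction xs) auto

lemma tail_small:
  assumes M: "0 < M" and e: "1 \<le> e" and K: "1 \<le> K" and j: "card (prime_factors M) \<le> i"
    and AD: "A * K ^ i \<le> D" and DN: "D * N0 = B * T" and TN: "T \<le> N0 * M" and N0: "0 < N0"
  shows "real A * GG K e M \<le> real B"
proof -
  have G1: "GG K e M \<le> real K ^ card (prime_factors M) / (real M * PP M)" by (rule GG_le[OF M e])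
  also have "\<dots> \<le> real K ^ card (prime_factors M) / real M"
    using PP_ge1[of M] M by (intro divide_left_mono) (auto intro: mult_pos_pos)
  also have "\<dots> \<le> real K ^ i / real M"
    using K j M by (intro divide_right_mono power_increasing) auto
  finally have G: "GG K e M \<le> real K ^ i / real M" .
  have "real A * GG K e M \<le> real A * (real K ^ i / real M)"
    using G by (intro mult_left_mono) auto
  also have "\<dots> = real (A * K ^ i) / real M" by simp
  also have "\<dots> \<le> real D / real M"
    using AD M by (intro divide_right_mono) (simp only: of_nat_le_iff, auto)
  also have "\<dots> \<le> real B"
  proof -
    have "D * N0 \<le> B * (N0 * M)" using DN TN by (metis mult_le_mono2)
    then have "D \<le> B * M" using N0 by (simp add: mult.commute mult.left_commute)
    then have "real D \<le> real B * real M" by (metis of_nat_le_iff of_nat_mult)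
    then show ?thesis using M by (simp add: divide_le_eq)
  qed
  finally show ?thesis .
qed

lemma tail_big:
  assumes cL: "consec (q # ps)" and M: "0 < M" and e: "1 \<le> e" and Kq: "K \<le> q + 1"
    and ge: "\<forall>p\<in>prime_factors M. q \<le> p" and j1: "j \<le> card (prime_factors M)"
    and j2: "j \<le> Suc (length ps)"
    and AB: "A * K ^ j \<le> B * prod_list (map Suc (take j (q # ps)))"
  shows "real A * GG K e M \<le> real B"
proof -
  let ?S = "prime_factors M"
  let ?P = "real (prod_list (map Suc (take j (q # ps))))"
  have Ppos: "?P > 0" using prod_list_Suc_pos by simp
  have pb: "?P * (real q + 1) ^ (card ?S - j) \<le> (\<Prod>p\<in>?S. real p + 1)"
    using pi_bound[OF cL _ _ _ _ j1, of ] ge j2 by auto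
  have Kj: "real K ^ card ?S = real K ^ j * real K ^ (card ?S - j)"
    using j1 by (simp add: power_add[symmetric])
  have "GG K e M \<le> real K ^ card ?S / (\<Prod>p\<in>?S. real p + 1)" by (rule GG_le2[OF M e])
  also have "\<dots> \<le> real K ^ card ?S / (?P * (real q + 1) ^ (card ?S - j))"
    using pb Ppos by (intro divide_left_mono mult_pos_pos) (auto intro!: prod_pos)
  also have "\<dots> = (real K ^ j / ?P) * (real K ^ (card ?S - j) / (real q + 1) ^ (card ?S - j))"
    using Kj by simp
  also have "\<dots> \<le> (real K ^ j / ?P) * 1"
  proof (intro mult_left_mono)
    have "real K ^ (card ?S - j) \<le> (real q + 1) ^ (card ?S - j)"
      using Kq by (intro power_mono) auto
    then show "real K ^ (card ?S - j) / (real q + 1) ^ (card ?S - j) \<le> 1"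
      by (simp add: divide_le_eq)
  qed (use Ppos in auto)
  finally have G: "GG K e M \<le> real K ^ j / ?P" by simp
  have "real A * GG K e M \<le> real A * (real K ^ j / ?P)"
    using G by (intro mult_left_mono) auto
  also have "\<dots> = real (A * K ^ j) / ?P" by simp
  also have "\<dots> \<le> real (B * prod_list (map Suc (take j (q # ps)))) / ?P"
    using AB Ppos by (intro divide_right_mono) (simp only: of_nat_le_iff, auto)
  also have "\<dots> = real B" using Ppos by simp
  finally show ?thesis .
qed



lemma decomp_eq:
  assumes q: "prime q" and M: "0 < M" and nd: "\<not> q dvd M" and m: "0 < m"
  shows "real A * GG K e (q ^ m * M) = real (A * K * q ^ e) * GG K e M / (real (q ^ m) * real (Suc q ^ e))"
  using GG_decomp[OF q M nd m, of K e] by (simp add: add.commute mult.assoc)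

lemma split_M:
  assumes q: "prime (q::nat)" and M: "0 < M"
  obtains m M' where "multiplicity q M = m" "M = q ^ m * M'" "0 < M'" "\<not> q dvd M'"
    "prime_factors M' = prime_factors M - {q}"
proof -
  have "M \<noteq> 0" "\<not> is_unit q" using M q by auto
  then obtain M' where M': "M = q ^ multiplicity q M * M'" "\<not> q dvd M'"
    using multiplicity_decompose'[of M q] by blast
  have "0 < M'" using M M' by (cases "M' = 0") auto
  have q0: "q > 0" using q prime_gt_0_nat by blast
  have pfM: "prime_factors M = prime_factors (q ^ multiplicity q M) \<union> prime_factors M'"
    using prime_factors_product[of "q ^ multiplicity q M" M'] M'(1) q0 \<open>0 < M'\<close> by auto
  have "q \<notin> prime_factors M'" using M'(2) by auto
  moreover have "prime_factors (q ^ multiplicity q M) \<subseteq> {q}"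
    using pf_prime_power[OF q] by (cases "multiplicity q M = 0") auto
  ultimately have "prime_factors M' = prime_factors M - {q}" using pfM by auto
  then show ?thesis using that[OF refl] M' \<open>0 < M'\<close> by blast
qed

lemma sound:
  shows "chk K e T c L A B D N0 \<Longrightarrow> consec L \<Longrightarrow> 1 \<le> e \<Longrightarrow> 1 \<le> K \<Longrightarrow> K \<le> 4 \<Longrightarrow> 0 < N0 \<Longrightarrow>
     D * N0 = B * T \<Longrightarrow> 0 < M \<Longrightarrow> (\<forall>p\<in>prime_factors M. hd L \<le> p) \<Longrightarrow> T \<le> N0 * M \<Longrightarrow>
     real A * GG K e M \<le> real B"
  and "chks K e T cs ps q A B D N0 A1 D1 E a Bq Nq \<Longrightarrow> consec (q # ps) \<Longrightarrow> 1 \<le> e \<Longrightarrow> 1 \<le> K \<Longrightarrow>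
     K \<le> 4 \<Longrightarrow> 0 < N0 \<Longrightarrow> D * N0 = B * T \<Longrightarrow> A1 = A * K * q ^ e \<Longrightarrow> D1 = D * Suc q ^ e \<Longrightarrow>
     E = Suc q ^ e \<Longrightarrow> Bq = B * q ^ a \<Longrightarrow> Nq = N0 * q ^ a \<Longrightarrow>
     0 < M \<Longrightarrow> (\<forall>p\<in>prime_factors M. q \<le> p) \<Longrightarrow> a \<le> multiplicity q M \<Longrightarrow> T \<le> N0 * M \<Longrightarrow>
     real A * GG K e M \<le> real B"
proof (induction K e T c L A B D N0 and K e T cs ps q A B D N0 A1 D1 E a Bq Nq arbitrary: M and M
    rule: chk_chks.induct)
  case (1 K e T c A B D N0)
  then show ?case by simp
next
  case (2 K e T q ps A B D N0)
  have "GG K e M \<le> 1"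
    using GG_le_1[of M e K] 2 by force
  then have "real A * GG K e M \<le> real A" by (simp add: mult_left_le)
  also have "\<dots> \<le> real B" using 2 by simp
  finally show ?case .
next
  case (3 K e T j q ps A B D N0)
  from "3.prems"(1) have c: "K \<le> q + 1" "N0 < T" "1 \<le> j" "j \<le> Suc (length ps)"
    "j = 1 \<or> A * K ^ (j - 1) \<le> D" "A * K ^ j \<le> B * prod_list (map Suc (take j (q # ps)))"
    by auto
  show ?case
  proof (cases "j \<le> card (prime_factors M)")
    case True
    show ?thesis
      by (rule tail_big[of q ps M e K j A B]) (use "3.prems" c True in auto)
  next
    case False
    have "M \<noteq> 1"
    proof
      assume "M = 1" then show False using c(2) "3.prems"(10) by simp
    qed
    then obtain p where "prime p" "p dvd M" using prime_factor_nat by blast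
    then have "p \<in> prime_factors M" using "3.prems"(8) by (auto intro: prime_factorsI)
    then have "card (prime_factors M) \<noteq> 0" by (metis card_0_eq empty_iff finite_set_mset)
    then have "j \<noteq> 1" using False by linarith
    then have AD: "A * K ^ (j - 1) \<le> D" using c(5) by auto
    show ?thesis
      by (rule tail_small[OF "3.prems"(8) "3.prems"(3) "3.prems"(4) _ AD "3.prems"(7) "3.prems"(10) "3.prems"(6)])
         (use False in auto)
  qed
next
  case (4 K e T cs q ps A B D N0)
  from "4.prems"(1) have c: "cs \<noteq> []" "ps \<noteq> []"
    "chks K e T cs ps q A B D N0 (A * K * q ^ e) (D * Suc q ^ e) (Suc q ^ e) 0 B N0" by auto
  show ?case
  proof (rule "4.IH"[OF c(3)])
    show "B = B * q ^ 0" by simp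
    show "N0 = N0 * q ^ 0" by simp
    show "0 \<le> multiplicity q M" by simp
    show "\<forall>p\<in>prime_factors M. q \<le> p" using "4.prems"(9) by simp
  qed (use "4.prems" in blast)+
next
  case (5 K e T ps q A B D N0 A1 D1 E a Bq Nq)
  have q: "prime q" using "5.prems"(2) consec_hd_prime by blast
  have q2: "q \<ge> 2" using q prime_ge_2_nat by blast
  obtain m M' where M': "multiplicity q M = m" "M = q ^ m * M'" "0 < M'" "\<not> q dvd M'"
    "prime_factors M' = prime_factors M - {q}"
    using split_M[OF q "5.prems"(13)] by blast
  from "5.prems"(1) have c: "0 < a" "A1 \<le> Bq * E" by auto
  let ?m = m
  have m: "0 < ?m" "a \<le> ?m" using c(1) "5.prems"(15) M'(1) by auto
  have G1: "GG K e M' \<le> 1"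
  proof (rule GG_le_1[OF M'(3) "5.prems"(3)], rule ballI)
    fix p assume p: "p \<in> prime_factors M'"
    then have "q \<le> p" "p \<noteq> q" using M'(5) "5.prems"(14) by auto
    then show "K \<le> p + 1" using q2 "5.prems"(5) by linarith
  qed
  have "real A * GG K e M = real A1 * GG K e M' / (real (q ^ ?m) * real E)"
    using decomp_eq[OF q M'(3,4) m(1), of A K e] "5.prems"(8,10) by (simp only: M'(2))
  also have "\<dots> \<le> real A1 * 1 / (real (q ^ a) * real E)"
  proof (intro frac_le mult_left_mono G1 mult_right_mono)
    show "real (q ^ a) \<le> real (q ^ ?m)" using m(2) q2 by (simp add: power_increasing)
    show "0 < real (q ^ a) * real E" using q2 "5.prems"(10) by simp
  qed (auto simp: GG_nonneg)
  also have "\<dots> \<le> real (Bq * E) / (real (q ^ a) * real E)"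
    using c(2) q2 "5.prems"(10) by (intro divide_right_mono) (simp only: mult_1_right of_nat_le_iff, auto)
  also have "\<dots> = real B"
    using q2 "5.prems"(10,11) by simp
  finally show ?case .
next
  case (6 K e T c cs ps q A B D N0 A1 D1 E a Bq Nq)
  have q: "prime q" using "6.prems"(2) consec_hd_prime by blast
  have q2: "q \<ge> 2" using q prime_ge_2_nat by blast
  obtain m M' where M': "multiplicity q M = m" "M = q ^ m * M'" "0 < M'" "\<not> q dvd M'"
    "prime_factors M' = prime_factors M - {q}"
    using split_M[OF q "6.prems"(13)] by blast
  let ?m = m
  from "6.prems"(1) have c1: "if a = 0 then chk K e T c ps A B D N0 else chk K e T c ps A1 (Bq * E) D1 Nq"
    and c2: "chks K e T cs ps q A B D N0 A1 D1 E (Suc a) (Bq * q) (Nq * q)" by auto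
  have cps: "consec ps" using "6.prems"(2) consec_tl by blast
  show ?case
  proof (cases "a < m")
    case True
    show ?thesis
    proof (rule "6.IH"(3)[OF c2])
      show "Bq * q = B * q ^ Suc a" using "6.prems"(11) by simp
      show "Nq * q = N0 * q ^ Suc a" using "6.prems"(12) by simp
      show "Suc a \<le> multiplicity q M" using True M'(1) by simp
    qed (use "6.prems" in blast)+
  next
    case False
    then have am: "a = m" using "6.prems"(15) M'(1) by auto
    have psne: "ps \<noteq> []" using c1 by (cases ps) (auto split: if_splits)
    then obtain q' r where ps: "ps = q' # r" by (cases ps) auto
    have geM': "\<forall>p\<in>prime_factors M'. hd ps \<le> p"
    proof
      fix p assume p: "p \<in> prime_factors M'"
      then have "q \<le> p" "p \<noteq> q" "prime p" using M'(5) "6.prems"(14) by auto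
      then show "hd ps \<le> p" using consec_next[of q q' r p] "6.prems"(2) ps by auto
    qed
    show ?thesis
    proof (cases "a = 0")
      case True
      then have cc: "chk K e T c ps A B D N0" using c1 by simp
      have "M = M'" using M'(2) am True by simp
      show ?thesis
      proof (rule "6.IH"(1)[OF True cc cps])
        show "0 < M" "T \<le> N0 * M" using "6.prems"(13,16) by blast+
        show "\<forall>p\<in>prime_factors M. hd ps \<le> p" using geM' \<open>M = M'\<close> by simp
      qed (use "6.prems" in blast)+
    next
      case False
      then have cc: "chk K e T c ps A1 (Bq * E) D1 Nq" using c1 by simp
      have qa: "0 < q ^ a" using q2 by simp
      have IH: "real A1 * GG K e M' \<le> real (Bq * E)"
      proof (rule "6.IH"(2)[OF False cc cps])
        show "0 < Nq" using "6.prems"(6,12) qa by simp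
        have "D1 * Nq = (D * N0) * (Suc q ^ e * q ^ a)" using "6.prems"(9,12) by (simp add: mult_ac)
        also have "\<dots> = (B * T) * (Suc q ^ e * q ^ a)" using "6.prems"(7) by simp
        also have "\<dots> = Bq * E * T" using "6.prems"(10,11) by (simp add: mult_ac)
        finally show "D1 * Nq = Bq * E * T" .
        show "T \<le> Nq * M'" using "6.prems"(12,16) M'(2) am by (simp add: mult.assoc)
        show "0 < M'" by (rule M'(3))
        show "\<forall>p\<in>prime_factors M'. hd ps \<le> p" by (rule geM')
      qed (use "6.prems" in blast)+
      have "real A * GG K e M = real A1 * GG K e M' / (real (q ^ a) * real E)"
        using decomp_eq[OF q M'(3,4), of m A K e] "6.prems"(8,10) am False by (simp only: M'(2))
      also have "\<dots> \<le> real (Bq * E) / (real (q ^ a) * real E)"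
        using IH qa "6.prems"(10) by (intro divide_right_mono) auto
      also have "\<dots> = real B"
        using q2 "6.prems"(10,11) by simp
      finally show ?thesis .
    qed
  qed
qed



definition PL :: "nat list" where "PL = [2, 3, 5, 7, 11, 13, 17, 19, 23, 29, 31, 37, 41, 43, 47, 53, 59, 61, 67, 71, 73, 79, 83, 89, 97]"

lemma PL_consec: "consec PL" by (simp add: PL_def)

lemma PL_hd: "hd PL = 2" by (simp add: PL_def)


lemma from_chk:
  assumes "chk K e T c L cd cn D 1" "D = cn * T" "consec L" "hd L = 2" "1 \<le> e" "1 \<le> K" "K \<le> 4"
    "0 < cd" "T \<le> M" "0 < M"
  shows "GG K e M \<le> real cn / real cd"
proof -
  have "\<forall>p\<in>prime_factors M. hd L \<le> p"
    using assms(4) by (auto dest: in_prime_factors_imp_prime prime_ge_2_nat)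
  then have "real cd * GG K e M \<le> real cn"
    using sound(1)[OF assms(1) assms(3) assms(5-7) _ _ assms(10)] assms(2,9) by simp
  then show ?thesis using assms(8) by (simp add: field_simps)
qed

lemma theta3_GG: "theta3 N = GG 2 1 N"
  unfolding theta3_def GG_def psi_def PP_def omega_def by simp

lemma two_four: "((2::real) ^ n) ^ 2 = 4 ^ n"
proof -
  have "((2::real) ^ n) ^ 2 = (2 ^ 2) ^ n" by (metis power_mult mult.commute)
  then show ?thesis by simp
qed

lemma theta2_GG: "theta2 N = GG 4 1 N"
  unfolding theta2_def GG_def psi_def PP_def omega_def two_four by simp

lemma theta1_GG: "0 < N \<Longrightarrow> theta1 N ^ 2 = GG 4 2 N"
proof -
  assume N: "0 < N"
  have "theta1 N ^ 2 = 4 ^ omega N * real N / (real N * PP N) ^ 2"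
    unfolding theta1_def psi_def PP_def by (simp add: power_divide power_mult_distrib two_four)
  also have "\<dots> = GG 4 2 N"
    unfolding GG_def omega_def using N PP_pos[of N] by (simp add: power2_eq_square field_simps)
  finally show ?thesis .
qed

lemma theta1_nonneg: "0 \<le> theta1 N"
  unfolding theta1_def psi_def by (auto intro!: divide_nonneg_nonneg mult_nonneg_nonneg prod_nonneg
    simp: add_nonneg_nonneg)

lemma claim3:
  assumes "chk 2 1 T c PL cd cn D 1" "D = cn * T" "0 < cd" "1 \<le> T" "real cn / real cd = X"
  shows "\<forall>N\<ge>T. theta3 N \<le> X"
  using from_chk[OF assms(1,2) PL_consec PL_hd] assms(3-5) by (auto simp: theta3_GG)

lemma claim2:
  assumes "chk 4 1 T c PL cd cn D 1" "D = cn * T" "0 < cd" "1 \<le> T" "real cn / real cd = X"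
  shows "\<forall>N\<ge>T. theta2 N \<le> X"
  using from_chk[OF assms(1,2) PL_consec PL_hd] assms(3-5) by (auto simp: theta2_GG)

lemma claim1:
  assumes "chk 4 2 T c PL cd cn D 1" "D = cn * T" "0 < cd" "1 \<le> T" "real cn / real cd = X ^ 2" "0 \<le> X"
  shows "\<forall>N\<ge>T. theta1 N \<le> X"
proof (intro allI impI)
  fix N assume N: "T \<le> N"
  then have "theta1 N ^ 2 \<le> X ^ 2"
    using from_chk[OF assms(1,2) PL_consec PL_hd, of N] assms(3-5) theta1_GG[of N] by auto
  then show "theta1 N \<le> X" using assms(6) power2_le_imp_le by blast
qed


definition cert_1_0 :: cert where "cert_1_0 = (Br [L1])"

lemma chk_1_0: "chk 4 2 1 cert_1_0 PL 1 1 1 1"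
  by (simp add: cert_1_0_def PL_def)

lemma claim_1_0: "\<forall>N\<ge>1. theta1 N \<le> 1.00"
  by (rule claim1[OF chk_1_0]) (simp_all add: power2_eq_square)

definition cert_1_1 :: cert where "cert_1_1 = (Br [(Br [(Br [(L3 2), (Br [(L3 1), (L3 1)])]), (Br [(L3 2), (L3 1)]), (L3 1)]), (Br [(Br [(L3 2), (Br [(L3 1)])]), (Br [(Br [(Br [(L3 1)]), (L3 1)]), (L3 1)]), (L3 1)]), (Br [(L3 2), (Br [(L3 1)])]), (L3 2)])"

lemma chk_1_1: "chk 4 2 43 cert_1_1 PL 40000 8649 371907 1"
  by (simp add: cert_1_1_def PL_def)

lemma claim_1_1: "\<forall>N\<ge>43. theta1 N \<le> 0.465"
  by (rule claim1[OF chk_1_1]) (simp_all add: power2_eq_square)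

definition cert_1_2 :: cert where "cert_1_2 = (Br [(Br [(Br [(L3 3), (Br [(L3 2), (L3 2)]), (L3 2)]), (Br [(L3 3), (Br [(L3 2), (L3 1)]), (L3 1)]), (L3 3), (L3 2)]), (Br [(Br [(L3 3), (Br [(L3 2), (Br [(L3 1)])]), (L3 2)]), (Br [(Br [(L3 2), (Br [(Br [(L3 1), (L3 1)]), (L3 1)])]), (Br [(Br [(Br [(Br [(Br [(L3 1), (L3 1)]), (L3 1)]), (L3 1)]), (L3 1)]), (L3 1)]), (L3 1)]), (Br [(L3 2), (L3 1)]), (L3 2)]), (Br [(L3 3), (Br [(L3 2), (Br [(L3 1), (L3 1)])]), (L3 2)]), (Br [(L3 3), (L3 2)]), (L3 3)])"

lemma chk_1_2: "chk 4 2 571 cert_1_2 PL 1000000 66049 37713979 1"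
  by (simp add: cert_1_2_def PL_def)

lemma claim_1_2: "\<forall>N\<ge>571. theta1 N \<le> 0.257"
  by (rule claim1[OF chk_1_2]) (simp_all add: power2_eq_square)

definition cert_1_3 :: cert where "cert_1_3 = (Br [(Br [(Br [(L3 4), (Br [(L3 3), (L3 3), (L3 2)]), (L3 3), (L3 2)]), (Br [(L3 4), (Br [(L3 3), (L3 2), (L3 1)]), (L3 3)]), (L3 4), (L3 3), (L3 3)]), (Br [(Br [(L3 4), (Br [(L3 3), (Br [(L3 2), (Br [(L3 1)])]), (L3 2)]), (L3 3), (L3 2)]), (Br [(Br [(L3 3), (Br [(Br [(L3 2), (L3 1)]), (Br [(Br [(Br [(L3 1)]), (L3 1)]), (L3 1)])]), (L3 2)]), (Br [(Br [(Br [(L3 2), (L3 2)]), (L3 2)]), (L3 2), (L3 1)]), (L3 2)]), (Br [(L3 3), (Br [(L3 2), (L3 2)]), (L3 2)]), (L3 3), (L3 3)]), (Br [(L3 4), (Br [(L3 3), (Br [(L3 2), (L3 2)]), (L3 2)]), (L3 3), (L3 3)]), (Br [(L3 4), (Br [(L3 3), (L3 2), (L3 2)]), (L3 3), (L3 2)]), (L3 4), (L3 4), (L3 3)])"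

lemma chk_1_3: "chk 4 2 8800 cert_1_3 PL 1000000 17689 155663200 1"
  by (simp add: cert_1_3_def PL_def)

lemma claim_1_3: "\<forall>N\<ge>8800. theta1 N \<le> 0.133"
  by (rule claim1[OF chk_1_3]) (simp_all add: power2_eq_square)

definition cert_1_4 :: cert where "cert_1_4 = (Br [(Br [(Br [(L3 5), (Br [(L3 4), (L3 4), (L3 3), (L3 2)]), (L3 4), (L3 3), (L3 3)]), (Br [(Br [(L3 4), (L3 4), (L3 3), (L3 2)]), (Br [(L3 4), (Br [(L3 3), (L3 2), (L3 1)]), (L3 3), (L3 2)]), (L3 4), (L3 3)]), (Br [(L3 4), (L3 4), (L3 3), (L3 3)]), (L3 4), (L3 4), (L3 4)]), (Br [(Br [(L3 5), (Br [(L3 4), (Br [(L3 3), (Br [(L3 2), (Br [(L3 1)])]), (L3 2)]), (L3 3), (L3 2)]), (L3 4), (L3 3), (L3 3)]), (Br [(Br [(L3 4), (Br [(Br [(L3 3), (L3 2), (L3 2)]), (Br [(Br [(L3 2), (Br [(L3 1)])]), (Br [(Br [(Br [(L3 1), (L3 1)]), (L3 1)]), (L3 1)])]), (L3 2)]), (L3 3), (L3 2)]), (Br [(Br [(Br [(L3 3), (Br [(L3 2), (L3 2)]), (L3 2)]), (Br [(Br [(Br [(L3 2), (L3 1)]), (L3 2)]), (L3 2)]), (L3 2)]), (L3 3), (L3 2)]), (L3 3), (L3 3)]), (Br [(L3 4), (Br [(L3 3), (L3 3), (L3 2)]), (L3 3), (L3 2)]), (L3 4), (L3 4), (L3 3)]),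 (Br [(L3 5), (Br [(L3 4), (Br [(Br [(L3 3), (L3 2), (L3 2)]), (L3 3), (L3 2)]), (L3 3), (L3 3)]), (L3 4), (L3 4), (L3 3), (L3 3)]), (Br [(L3 5), (Br [(L3 4), (Br [(L3 3), (L3 3), (L3 2)]), (L3 3), (L3 2)]), (L3 4), (L3 4), (L3 3)]), (L3 5), (L3 5), (L3 5), (L3 4), (L3 4)])"

lemma chk_1_4: "chk 4 2 150000 cert_1_4 PL 100000000 368449 55267350000 1"
  by (simp add: cert_1_4_def PL_def)

lemma claim_1_4: "\<forall>N\<ge>150000. theta1 N \<le> 0.0607"
  by (rule claim1[OF chk_1_4]) (simp_all add: power2_eq_square)

definition cert_1_5 :: cert where "cert_1_5 = (Br [(Br [(Br [(L3 6), (Br [(L3 5), (Br [(L3 4), (L3 4), (L3 3)]), (L3 4), (L3 3), (L3 3)]), (L3 5), (L3 4), (L3 4), (L3 3)]), (Br [(Br [(L3 5), (L3 5), (L3 4), (L3 3), (L3 3)]), (Br [(L3 5), (Br [(L3 4), (Br [(L3 3), (L3 2), (L3 1)]), (L3 2)]), (L3 4), (L3 3)]), (L3 5), (L3 4), (L3 4)]), (Br [(L3 5), (L3 5), (L3 4), (L3 4), (L3 3)]), (L3 5), (L3 5), (L3 5), (L3 4), (L3 4)]), (Br [(Br [(L3 6), (Br [(L3 5), (Br [(L3 4), (Br [(L3 3), (Br [(L3 2), (Br [(L3 1)])]), (L3 2)]), (L3 3)]), (L3 4), (L3 3)]), (L3 5), (L3 4), (L3 4), (L3 3)]), (Br [(Br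 [(L3 5), (Br [(L3 4), (Br [(L3 3), (Br [(Br [(L3 2), (Br [(L3 1), (L3 1)])]), (Br [(Br [(L3 1), (L3 1)]), (L3 1)])]), (L3 2)]), (L3 3), (L3 2)]), (L3 4), (L3 3), (L3 3)]), (Br [(Br [(Br [(L3 4), (Br [(L3 3), (L3 2), (L3 2)]), (L3 3)]), (Br [(Br [(L3 3), (Br [(L3 2), (Br [(L3 1), (L3 1)])]), (L3 2)]), (Br [(Br [(L3 2), (L3 2)]), (L3 2)]), (L3 2)]), (L3 3), (L3 2)]), (Br [(Br [(Br [(Br [(L3 3), (L3 2), (L3 2)]), (Br [(Br [(L3 2), (L3 2)]), (L3 2)]), (L3 2)]), (L3 3), (L3 2)]), (L3 3), (L3 2)]), (L3 3), (L3 3)]), (Br [(L3 4), (L3 3), (L3 3)]), (L3 4), (L3 3)]), (Br [(L3 5), (Br [(L3 4), (Br [(L3 3), (L3 3), (L3 2)]), (L3 3), (L3 2)]), (L3 4), (L3 3), (L3 3)]), (L3 5), (L3 5), (L3 4), (L3 4), (L3 4)]), (Br [(L3 6), (Br [(Br [(L3 5), (L3 4), (L3 4), (L3 3)]), (Br [(Br [(L3 4), (Br [(L3 3), (L3 2), (L3 2)]), (L3 3)]), (Br [(Br [(L3 3), (L3 3), (L3 2)]), (L3 3), (L3 2)]), (L3 3), (L3 2)]), (L3 4), (L3 4), (L3 3)]), (Br [(L3 5), (L3 4), (L3 4), (L3 3)]), (L3 5), (L3 5), (L3 4), (L3 4)]), (Br [(L3 6), (Br [(L3 5), (Br [(L3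 4), (Br [(L3 3), (L3 3), (L3 2)]), (L3 3), (L3 2)]), (L3 4), (L3 3), (L3 3)]), (L3 5), (L3 5), (L3 4), (L3 4)]), (Br [(L3 6), (L3 5), (L3 5), (L3 4), (L3 4), (L3 4)]), (L3 6), (L3 6), (L3 5), (L3 5), (L3 5), (L3 5), (L3 4)])"

lemma chk_1_5: "chk 4 2 2700000 cert_1_5 PL 4000000 2809 7584300000 1"
  by (simp add: cert_1_5_def PL_def)

lemma claim_1_5: "\<forall>N\<ge>2700000. theta1 N \<le> 0.0265"
  by (rule claim1[OF chk_1_5]) (simp_all add: power2_eq_square)

definition cert_1_6 :: cert where "cert_1_6 = (Br [(Br [(Br [(L3 7), (Br [(L3 6), (Br [(L3 5), (Br [(L3 4), (L3 4), (L3 3), (L3 2)]), (L3 4), (L3 3)]), (L3 5), (L3 4), (L3 4)]), (L3 6), (L3 6), (L3 5), (L3 4), (L3 4)]), (Br [(Br [(L3 6), (L3 6), (L3 5), (L3 5), (L3 4), (L3 3)]), (Br [(L3 6), (Br [(L3 5), (Br [(L3 4), (L3 3), (L3 2)]), (L3 3), (L3 3)]), (L3 5), (L3 4), (L3 3)]), (L3 6), (L3 5), (L3 5), (L3 4), (L3 3)]), (Br [(L3 6), (L3 6), (L3 5), (L3 5), (L3 4), (L3 4)]), (Br [(L3 6), (L3 5), (L3 5), (L3 4), (L3 4)]), (L3 6), (L3 6), (L3 5), (L3 5), (L3 5), (L3 4)]), (Br [(Br [(Br [(L3 6), (L3 6), (L3 5), (L3 5), (L3 4), (L3 3)]), (Br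 [(L3 6), (Br [(L3 5), (Br [(L3 4), (Br [(L3 3), (Br [(L3 2), (Br [(L3 1)])]), (L3 2)]), (L3 3)]), (L3 4), (L3 3)]), (L3 5), (L3 4), (L3 3)]), (L3 6), (L3 5), (L3 5), (L3 4), (L3 4)]), (Br [(Br [(L3 6), (Br [(L3 5), (Br [(L3 4), (Br [(L3 3), (Br [(L3 2), (Br [(Br [(Br [(L3 1), (L3 1)]), (L3 1)]), (L3 1)])]), (L3 2)]), (L3 3), (L3 2)]), (L3 4), (L3 3)]), (L3 5), (L3 4), (L3 4), (L3 3)]), (Br [(Br [(L3 5), (Br [(L3 4), (Br [(Br [(L3 3), (Br [(L3 2), (L3 2)]), (L3 2)]), (Br [(Br [(L3 2), (L3 2)]), (L3 2)]), (L3 2)]), (L3 3), (L3 2)]), (L3 4), (L3 3)]), (Br [(Br [(Br [(L3 4), (Br [(L3 3), (L3 3), (L3 2)]), (L3 3), (L3 2)]), (Br [(Br [(Br [(L3 3), (L3 3), (L3 2)]), (L3 3), (L3 2)]), (L3 3), (L3 2)]), (L3 3), (L3 2)]), (Br [(Br [(Br [(Br [(L3 3), (L3 3), (L3 2)]), (L3 3), (L3 2)]), (L3 3), (L3 2)]), (L3 3), (L3 2)]), (L3 3), (L3 2)]), (L3 4), (L3 4), (L3 3)]), (Br [(L3 5), (Br [(L3 4), (Br [(L3 3), (L3 3), (L3 2)]), (L3 3)]), (L3 4), (L3 3)]), (L3 5), (L3 4), (L3 4), (L3 3)]), (Br [(L3 6), (Br [(L3 5), (Br [(Br [(L3 4),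 (L3 3), (L3 3)]), (Br [(Br [(L3 3), (L3 3), (L3 2)]), (L3 3), (L3 2)]), (L3 3), (L3 2)]), (L3 4), (L3 3), (L3 3)]), (L3 5), (L3 5), (L3 4), (L3 3)]), (L3 6), (L3 6), (L3 5), (L3 5), (L3 5), (L3 4)]), (Br [(Br [(Br [(L3 6), (L3 6), (L3 5), (L3 4), (L3 4)]), (L3 6), (L3 6), (L3 5), (L3 5), (L3 4)]), (Br [(Br [(L3 6), (L3 5), (L3 5), (L3 4), (L3 3)]), (Br [(Br [(L3 5), (Br [(L3 4), (L3 3), (L3 3)]), (L3 4), (L3 3)]), (Br [(Br [(L3 4), (Br [(L3 3), (L3 3), (L3 2)]), (L3 3), (L3 2)]), (Br [(Br [(L3 3), (L3 3), (L3 2)]), (L3 3), (L3 2)]), (L3 3), (L3 2)]), (L3 4), (L3 4), (L3 3)]), (L3 5), (L3 5), (L3 4), (L3 4)]), (Br [(L3 6), (Br [(L3 5), (Br [(L3 4), (L3 3), (L3 3)]), (L3 4), (L3 3)]), (L3 5), (L3 4), (L3 4)]), (L3 6), (L3 6), (L3 5), (L3 5), (L3 4), (L3 4)]), (Br [(Br [(L3 6), (L3 6), (L3 5), (L3 5), (L3 4), (L3 4)]), (Br [(L3 6), (Br [(L3 5), (Br [(L3 4), (Br [(L3 3), (L3 3), (L3 2)]), (L3 3)]), (L3 4), (L3 3), (L3 3)]), (L3 5), (L3 4), (L3 4), (L3 3)]), (L3 6), (L3 6), (L3 5), (L3 5), (L3 5), (L3 4)]), (Br [(Br [(L3 6), (L3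 6), (L3 5), (L3 5), (L3 4)]), (Br [(L3 6), (L3 5), (L3 5), (L3 4), (L3 4)]), (L3 6), (L3 6), (L3 5), (L3 5), (L3 4), (L3 4)]), (Br [(L3 6), (L3 6), (L3 6), (L3 5), (L3 5), (L3 5), (L3 4)]), (Br [(L3 6), (L3 6), (L3 5), (L3 5), (L3 5), (L3 4)]), (L3 6), (L3 6), (L3 6), (L3 6), (L3 5), (L3 5), (L3 5)])"

lemma chk_1_6: "chk 4 2 63000000 cert_1_6 PL 25000000 2809 176967000000 1"
  by (simp add: cert_1_6_def PL_def)

lemma claim_1_6: "\<forall>N\<ge>63000000. theta1 N \<le> 0.0106"
  by (rule claim1[OF chk_1_6]) (simp_all add: power2_eq_square)

definition cert_2_0 :: cert where "cert_2_0 = (Br [L1])"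

lemma chk_2_0: "chk 4 1 1 cert_2_0 PL 50 67 67 1"
  by (simp add: cert_2_0_def PL_def)

lemma claim_2_0: "\<forall>N\<ge>1. theta2 N \<le> 1.34"
  by (rule claim2[OF chk_2_0]) (simp_all add: power2_eq_square)

definition cert_2_1 :: cert where "cert_2_1 = (Br [(L3 3), (Br [(L3 2), (Br [(Br [(L3 1), (L3 1)]), (L3 1)])]), (L3 2)])"

lemma chk_2_1: "chk 4 1 43 cert_2_1 PL 200 89 3827 1"
  by (simp add: cert_2_1_def PL_def)

lemma claim_2_1: "\<forall>N\<ge>43. theta2 N \<le> 0.445"
  by (rule claim2[OF chk_2_1]) (simp_all add: power2_eq_square)

definition cert_2_2 :: cert where "cert_2_2 = (Br [(L3 4), (Br [(L3 3), (Br [(Br [(L3 2), (Br [(Br [(L3 1), (L3 1)]), (L3 1)])]), (Br [(Br [(Br [(Br [(Br [(L3 1), (L3 1)]), (L3 1)]), (L3 1)]), (L3 1)]), (L3 1)]), (L3 1)]), (L3 2)]), (Br [(L3 3), (Br [(L3 2), (Br [(L3 1), (L3 1)])]), (L3 2)]), (L3 3), (L3 3)])"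

lemma chk_2_2: "chk 4 1 571 cert_2_2 PL 1000 149 85079 1"
  by (simp add: cert_2_2_def PL_def)

lemma claim_2_2: "\<forall>N\<ge>571. theta2 N \<le> 0.149"
  by (rule claim2[OF chk_2_2]) (simp_all add: power2_eq_square)

definition cert_2_3 :: cert where "cert_2_3 = (Br [(L3 5), (Br [(L3 4), (Br [(Br [(L3 3), (Br [(L3 2), (Br [(Br [(Br [(L3 1), (L3 1)]), (L3 1)]), (L3 1)])]), (L3 2)]), (Br [(Br [(Br [(L3 2), (Br [(Br [(L3 1), (L3 1)]), (L3 1)])]), (Br [(Br [(Br [(Br [(L3 1), (L3 1)]), (L3 1)]), (L3 1)]), (L3 1)])]), (Br [(Br [(Br [(Br [(Br [(Br [(Br [(Br [(L3 1), (L3 1)]), (L3 1)]), (L3 1)]), (L3 1)]), (L3 1)]), (L3 1)]), (L3 1)]), (L3 1)]), (L3 1)]), (L3 2)]), (Br [(L3 3), (Br [(L3 2), (Br [(L3 1), (L3 1)])]), (L3 2)]), (L3 3), (L3 3)]), (Br [(L3 4), (Br [(L3 3), (Br [(L3 2), (Br [(Br [(Br [(Br [(L3 1), (L3 1)]), (L3 1)]), (L3 1)]), (L3 1)])]), (L3 2)]), (L3 3), (L3 3)]), (L3 4), (L3 4), (L3 4)])"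

lemma chk_2_3: "chk 4 1 8800 cert_2_3 PL 1250 53 466400 1"
  by (simp add: cert_2_3_def PL_def)

lemma claim_2_3: "\<forall>N\<ge>8800. theta2 N \<le> 0.0424"
  by (rule claim2[OF chk_2_3]) (simp_all add: power2_eq_square)

definition cert_2_4 :: cert where "cert_2_4 = (Br [(L3 6), (Br [(L3 5), (Br [(Br [(L3 4), (Br [(L3 3), (Br [(Br [(L3 2), (Br [(L3 1), (L3 1)])]), (Br [(Br [(Br [(L3 1), (L3 1)]), (L3 1)]), (L3 1)])]), (L3 2)]), (L3 3), (L3 2)]), (Br [(Br [(Br [(L3 3), (Br [(L3 2), (Br [(L3 1), (L3 1)])]), (L3 2)]), (Br [(Br [(Br [(L3 2), (Br [(L3 1), (L3 1)])]), (Br [(Br [(L3 1), (L3 1)]), (L3 1)])]), (Br [(Br [(Br [(Br [(Br [(L3 1), (L3 1)]), (L3 1)]), (L3 1)]), (L3 1)]), (L3 1)])]), (L3 2)]), (Br [(Br [(Br [(Br [(Br [(L3 2), (Br [(L3 1), (L3 1)])]), (Br [(Br [(Br [(L3 1), (L3 1)]), (L3 1)]), (L3 1)])]), (L3 2)]), (L3 2), (L3 1)]), (L3 2), (L3 1)]), (L3 2)]), (L3 3), (L3 3)]), (Br [(L3 4), (Br [(L3 3), (Br [(L3 2), (L3 2)]), (L3 2)]), (L3 3), (L3 2)]), (L3 4), (L3 4), (L3 3)]), (Br [(L3 5), (Br [(L3 4), (Br [(L3 3), (Br [(Br [(Br [(L3 2), (L3 2)]), (L3 2)]), (L3 2)]),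 (L3 2)]), (L3 3), (L3 3)]), (L3 4), (L3 4), (L3 3)]), (Br [(L3 5), (Br [(L3 4), (Br [(L3 3), (Br [(L3 2), (L3 2)]), (L3 2)]), (L3 3)]), (L3 4), (L3 4), (L3 3)]), (L3 5), (L3 5), (L3 5), (L3 4), (L3 4)])"

lemma chk_2_4: "chk 4 1 150000 cert_2_4 PL 100000 941 141150000 1"
  by (simp add: cert_2_4_def PL_def)

lemma claim_2_4: "\<forall>N\<ge>150000. theta2 N \<le> 0.00941"
  by (rule claim2[OF chk_2_4]) (simp_all add: power2_eq_square)

definition cert_2_5 :: cert where "cert_2_5 = (Br [(L3 7), (Br [(L3 6), (Br [(Br [(L3 5), (Br [(L3 4), (Br [(L3 3), (Br [(Br [(L3 2), (Br [(L3 1), (L3 1)])]), (Br [(Br [(L3 1), (L3 1)]), (L3 1)])]), (L3 2)]), (L3 3)]), (L3 4), (L3 3), (L3 3)]), (Br [(Br [(L3 4), (Br [(Br [(L3 3), (Br [(L3 2), (Br [(L3 1), (L3 1)])]), (L3 2)]), (Br [(Br [(L3 2), (Br [(Br [(Br [(L3 1), (L3 1)]), (L3 1)]), (L3 1)])]), (Br [(Br [(Br [(Br [(Br [(L3 1), (L3 1)]), (L3 1)]), (L3 1)]), (L3 1)]), (L3 1)])]), (L3 2)]), (L3 3), (L3 2)]), (Br [(Br [(Br [(Br [(L3 3), (Br [(L3 2), (Br [(L3 1), (L3 1)])]), (L3 2)]), (Br [(Br [(L3 2), (Br [(Br [(L3 1), (L3 1)]), (L3 1)])]), (Br [(Br [(Br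 [(Br [(L3 1), (L3 1)]), (L3 1)]), (L3 1)]), (L3 1)])]), (L3 2)]), (Br [(Br [(Br [(Br [(L3 2), (Br [(L3 1), (L3 1)])]), (Br [(Br [(Br [(Br [(Br [(L3 1), (L3 1)]), (L3 1)]), (L3 1)]), (L3 1)]), (L3 1)])]), (Br [(Br [(Br [(Br [(Br [(Br [(Br [(L3 1), (L3 1)]), (L3 1)]), (L3 1)]), (L3 1)]), (L3 1)]), (L3 1)]), (L3 1)])]), (Br [(Br [(Br [(Br [(Br [(Br [(Br [(Br [(Br [(L3 1), (L3 1)]), (L3 1)]), (L3 1)]), (L3 1)]), (L3 1)]), (L3 1)]), (L3 1)]), (L3 1)]), (L3 1)])]), (L3 2)]), (Br [(Br [(Br [(Br [(Br [(Br [(L3 2), (Br [(L3 1), (L3 1)])]), (Br [(Br [(L3 1), (L3 1)]), (L3 1)])]), (Br [(Br [(Br [(Br [(Br [(Br [(L3 1), (L3 1)]), (L3 1)]), (L3 1)]), (L3 1)]), (L3 1)]), (L3 1)])]), (Br [(Br [(Br [(Br [(Br [(Br [(Br [(Br [(Br [(Br [(L3 1), (L3 1)]), (L3 1)]), (L3 1)]), (L3 1)]), (L3 1)]), (L3 1)]), (L3 1)]), (L3 1)]), (L3 1)]), (L3 1)])]), (Br [(Br [(Br [(Br [(Br [(Br [(Br [(Br [(Br [(Br [(Br [(Br [(L3 1), (L3 1)]), (L3 1)]), (L3 1)]), (L3 1)]), (L3 1)]), (L3 1)]), (L3 1)]), (L3 1)]), (L3 1)]), (L3 1)]), (L3 1)]),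 (L3 1)]), (L3 1)]), (L3 2), (L3 1)]), (L3 2)]), (L3 3), (L3 3)]), (L3 4), (L3 4), (L3 3)]), (Br [(L3 5), (Br [(L3 4), (Br [(L3 3), (Br [(Br [(L3 2), (Br [(L3 1), (L3 1)])]), (L3 2)]), (L3 2)]), (L3 3), (L3 2)]), (L3 4), (L3 3), (L3 3)]), (L3 5), (L3 5), (L3 4), (L3 4)]), (Br [(L3 6), (Br [(L3 5), (Br [(L3 4), (Br [(Br [(L3 3), (Br [(Br [(L3 2), (Br [(L3 1), (L3 1)])]), (Br [(Br [(L3 1), (L3 1)]), (L3 1)])]), (L3 2)]), (Br [(Br [(Br [(L3 2), (Br [(Br [(L3 1), (L3 1)]), (L3 1)])]), (Br [(Br [(Br [(Br [(L3 1), (L3 1)]), (L3 1)]), (L3 1)]), (L3 1)])]), (L3 2)]), (L3 2)]), (L3 3), (L3 2)]), (L3 4), (L3 4), (L3 3)]), (L3 5), (L3 5), (L3 5), (L3 4), (L3 4)]), (Br [(L3 6), (Br [(L3 5), (Br [(L3 4), (Br [(L3 3), (Br [(L3 2), (L3 2)]), (L3 2)]), (L3 3), (L3 2)]), (L3 4), (L3 3)]), (L3 5), (L3 5), (L3 4), (L3 4)]), (L3 6), (L3 6), (L3 6), (L3 5), (L3 5), (L3 5), (L3 5)])"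

lemma chk_2_5: "chk 4 1 2700000 cert_2_5 PL 100000 189 510300000 1"
  by (simp add: cert_2_5_def PL_def)

lemma claim_2_5: "\<forall>N\<ge>2700000. theta2 N \<le> 0.00189"
  by (rule claim2[OF chk_2_5]) (simp_all add: power2_eq_square)

definition cert_2_6 :: cert where "cert_2_6 = (Br [(L3 8), (Br [(L3 7), (Br [(Br [(L3 6), (Br [(L3 5), (Br [(L3 4), (Br [(L3 3), (Br [(L3 2), (Br [(Br [(Br [(L3 1), (L3 1)]), (L3 1)]), (L3 1)])]), (L3 2)]), (L3 3), (L3 2)]), (L3 4), (L3 3)]), (L3 5), (L3 4), (L3 4)]), (Br [(Br [(L3 5), (Br [(L3 4), (Br [(Br [(L3 3), (Br [(L3 2), (Br [(Br [(L3 1), (L3 1)]), (L3 1)])]), (L3 2)]), (Br [(Br [(L3 2), (Br [(Br [(Br [(L3 1), (L3 1)]), (L3 1)]), (L3 1)])]), (Br [(Br [(Br [(Br [(Br [(Br [(L3 1), (L3 1)]), (L3 1)]), (L3 1)]), (L3 1)]), (L3 1)]), (L3 1)])]), (L3 2)]), (L3 3), (L3 2)]), (L3 4), (L3 3)]), (Br [(Br [(Br [(L3 4), (Br [(L3 3), (Br [(Br [(L3 2), (Br [(L3 1), (L3 1)])]), (Br [(Br [(Br [(L3 1), (L3 1)]), (L3 1)]), (L3 1)])]), (L3 2)]), (L3 3), (L3 2)]), (Br [(Br [(Br [(L3 3), (Br [(L3 2), (Br [(L3 1), (L3 1)])]), (L3 2)]), (Br [(Br [(Br [(L3 2), (Br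 [(L3 1), (L3 1)])]), (Br [(Br [(Br [(L3 1), (L3 1)]), (L3 1)]), (L3 1)])]), (Br [(Br [(Br [(Br [(Br [(Br [(L3 1), (L3 1)]), (L3 1)]), (L3 1)]), (L3 1)]), (L3 1)]), (L3 1)])]), (L3 2)]), (Br [(Br [(Br [(Br [(L3 2), (Br [(Br [(Br [(L3 1), (L3 1)]), (L3 1)]), (L3 1)])]), (Br [(Br [(Br [(Br [(L3 1), (L3 1)]), (L3 1)]), (L3 1)]), (L3 1)])]), (Br [(Br [(Br [(Br [(Br [(Br [(Br [(L3 1), (L3 1)]), (L3 1)]), (L3 1)]), (L3 1)]), (L3 1)]), (L3 1)]), (L3 1)])]), (Br [(Br [(Br [(Br [(Br [(Br [(Br [(Br [(Br [(Br [(Br [(L3 1), (L3 1)]), (L3 1)]), (L3 1)]), (L3 1)]), (L3 1)]), (L3 1)]), (L3 1)]), (L3 1)]), (L3 1)]), (L3 1)]), (L3 1)])]), (L3 2)]), (L3 3), (L3 2)]), (Br [(Br [(Br [(Br [(L3 3), (Br [(Br [(L3 2), (Br [(L3 1), (L3 1)])]), (Br [(Br [(L3 1), (L3 1)]), (L3 1)])]), (L3 2)]), (Br [(Br [(Br [(L3 2), (Br [(Br [(Br [(L3 1), (L3 1)]), (L3 1)]), (L3 1)])]), (Br [(Br [(Br [(Br [(Br [(L3 1), (L3 1)]), (L3 1)]), (L3 1)]), (L3 1)]), (L3 1)])]), (Br [(Br [(Br [(Br [(Br [(Br [(Br [(Br [(Br [(L3 1), (L3 1)]), (L3 1)]), (L3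 1)]), (L3 1)]), (L3 1)]), (L3 1)]), (L3 1)]), (L3 1)]), (L3 1)])]), (L3 2)]), (Br [(Br [(Br [(Br [(Br [(L3 2), (Br [(Br [(L3 1), (L3 1)]), (L3 1)])]), (Br [(Br [(Br [(Br [(L3 1), (L3 1)]), (L3 1)]), (L3 1)]), (L3 1)])]), (Br [(Br [(Br [(Br [(Br [(Br [(L3 1), (L3 1)]), (L3 1)]), (L3 1)]), (L3 1)]), (L3 1)]), (L3 1)])]), (Br [(Br [(Br [(Br [(Br [(Br [(Br [(Br [(Br [(Br [(L3 1), (L3 1)]), (L3 1)]), (L3 1)]), (L3 1)]), (L3 1)]), (L3 1)]), (L3 1)]), (L3 1)]), (L3 1)]), (L3 1)])]), (L3 2), (L3 1)]), (L3 2)]), (Br [(Br [(Br [(Br [(Br [(Br [(Br [(Br [(L3 2), (Br [(L3 1), (L3 1)])]), (Br [(Br [(L3 1), (L3 1)]), (L3 1)])]), (Br [(Br [(Br [(Br [(L3 1), (L3 1)]), (L3 1)]), (L3 1)]), (L3 1)])]), (L3 2)]), (L3 2)]), (L3 2)]), (L3 2), (L3 1)]), (L3 2), (L3 1)]), (L3 2)]), (L3 3), (L3 2)]), (L3 4), (L3 4), (L3 3)]), (Br [(L3 5), (Br [(L3 4), (Br [(L3 3), (Br [(L3 2), (L3 2)]), (L3 2)]), (L3 3)]), (L3 4), (L3 3)]), (L3 5), (L3 4), (L3 4)]), (Br [(L3 6), (Br [(L3 5), (Br [(L3 4), (Br [(Br [(L3 3), (Br [(L3 2), (L3 2)]), (L3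 2)]), (Br [(Br [(L3 2), (L3 2)]), (L3 2)]), (L3 2)]), (L3 3), (L3 2)]), (L3 4), (L3 3), (L3 3)]), (L3 5), (L3 5), (L3 4), (L3 3)]), (L3 6), (L3 6), (L3 5), (L3 5), (L3 5), (L3 4)]), (Br [(L3 7), (Br [(L3 6), (Br [(L3 5), (Br [(Br [(L3 4), (Br [(L3 3), (Br [(L3 2), (Br [(Br [(Br [(L3 1), (L3 1)]), (L3 1)]), (L3 1)])]), (L3 2)]), (L3 3), (L3 2)]), (Br [(Br [(Br [(L3 3), (Br [(L3 2), (Br [(L3 1), (L3 1)])]), (L3 2)]), (Br [(Br [(L3 2), (Br [(Br [(L3 1), (L3 1)]), (L3 1)])]), (L3 2)]), (L3 2)]), (Br [(Br [(Br [(Br [(L3 2), (L3 2)]), (L3 2)]), (L3 2)]), (L3 2)]), (L3 2)]), (L3 3), (L3 2)]), (L3 4), (L3 4), (L3 3)]), (L3 5), (L3 5), (L3 4), (L3 4)]), (L3 6), (L3 6), (L3 6), (L3 5), (L3 5), (L3 4)]), (Br [(L3 7), (Br [(L3 6), (Br [(L3 5), (Br [(L3 4), (Br [(L3 3), (Br [(Br [(L3 2), (L3 2)]), (L3 2)]), (L3 2)]), (L3 3)]), (L3 4), (L3 3), (L3 3)]), (L3 5), (L3 4), (L3 4), (L3 3)]), (L3 6), (L3 6), (L3 5), (L3 5), (L3 5), (L3 4)]), (L3 7), (L3 7), (L3 7), (L3 6), (L3 6), (L3 6), (L3 6), (L3 5), (L3 5), (L3 5)])"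

lemma chk_2_6: "chk 4 1 63000000 cert_2_6 PL 500000 157 9891000000 1"
  by (simp add: cert_2_6_def PL_def)

lemma claim_2_6: "\<forall>N\<ge>63000000. theta2 N \<le> 0.000314"
  by (rule claim2[OF chk_2_6]) (simp_all add: power2_eq_square)

definition cert_3_0 :: cert where "cert_3_0 = L1"

lemma chk_3_0: "chk 2 1 1 cert_3_0 PL 1 1 1 1"
  by (simp add: cert_3_0_def PL_def)

lemma claim_3_0: "\<forall>N\<ge>1. theta3 N \<le> 1.00"
  by (rule claim3[OF chk_3_0]) (simp_all add: power2_eq_square)

definition cert_3_1 :: cert where "cert_3_1 = (Br [(Br [(Br [(L3 2), (Br [(L3 1), (L3 1)]), (L3 1)]), (Br [(Br [(Br [(Br [(L3 1), (L3 1)]), (L3 1)]), (L3 1)]), (L3 1)]), (L3 1)]), (Br [(Br [(Br [(Br [(Br [(Br [(Br [(L3 1), (L3 1)]), (L3 1)]), (L3 1)]), (L3 1)]), (L3 1)]), (L3 1)]), (Br [(Br [(L3 1), (L3 1)]), (L3 1)]), (L3 1)]), (Br [(Br [(Br [(L3 1), (L3 1)]), (L3 1)]), (L3 1)]), (Br [(L3 1), (L3 1)]), (L3 1)])"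

lemma chk_3_1: "chk 2 1 43 cert_3_1 PL 2500 139 5977 1"
  by (simp add: cert_3_1_def PL_def)

lemma claim_3_1: "\<forall>N\<ge>43. theta3 N \<le> 0.0556"
  by (rule claim3[OF chk_3_1]) (simp_all add: power2_eq_square)

definition cert_3_2 :: cert where "cert_3_2 = (Br [(Br [(Br [(L3 3), (Br [(L3 2), (Br [(Br [(L3 1), (L3 1)]), (L3 1)]), (L3 1)]), (L3 2), (L3 1)]), (Br [(Br [(Br [(L3 2), (Br [(L3 1), (L3 1)])]), (L3 2), (L3 1)]), (L3 2), (L3 1)]), (Br [(L3 2), (L3 2), (L3 1)]), (L3 2), (L3 2)]), (Br [(Br [(Br [(Br [(Br [(L3 2), (L3 2)]), (L3 2), (L3 1)]), (L3 2), (L3 1)]), (L3 2), (L3 2)]), (Br [(Br [(L3 2), (Br [(Br [(L3 1), (L3 1)]), (L3 1)]), (L3 1)]), (Br [(Br [(Br [(Br [(Br [(L3 1), (L3 1)]), (L3 1)]), (L3 1)]), (L3 1)]), (L3 1)]), (L3 1)]), (L3 2), (L3 2), (L3 1)]), (Br [(Br [(Br [(L3 2), (L3 2), (L3 1)]), (L3 2), (L3 1)]), (Br [(L3 2), (Br [(L3 1), (L3 1)]), (L3 1)]), (L3 2), (L3 1)]), (Br [(Br [(L3 2), (L3 2), (L3 1)]), (L3 2), (L3 2)]), (Br [(L3 2), (L3 2), (L3 1)]), (L3 2), (L3 2), (L3 2)])"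

lemma chk_3_2: "chk 2 1 571 cert_3_2 PL 50000 463 264373 1"
  by (simp add: cert_3_2_def PL_def)

lemma claim_3_2: "\<forall>N\<ge>571. theta3 N \<le> 0.00926"
  by (rule claim3[OF chk_3_2]) (simp_all add: power2_eq_square)

definition cert_3_3 :: cert where "cert_3_3 = (Br [(Br [(Br [(L3 4), (Br [(L3 3), (L3 3), (L3 2), (L3 1)]), (L3 3), (L3 2), (L3 2)]), (Br [(Br [(L3 3), (L3 3), (L3 2), (L3 1)]), (L3 3), (L3 3), (L3 2), (L3 1)]), (Br [(L3 3), (L3 3), (L3 2), (L3 1)]), (L3 3), (L3 3), (L3 2), (L3 2)]), (Br [(L3 4), (Br [(Br [(L3 3), (Br [(L3 2), (Br [(Br [(Br [(L3 1), (L3 1)]), (L3 1)]), (L3 1)])]), (L3 2), (L3 1)]), (Br [(Br [(Br [(L3 2), (Br [(Br [(L3 1), (L3 1)]), (L3 1)])]), (Br [(Br [(Br [(Br [(L3 1), (L3 1)]), (L3 1)]), (L3 1)]), (L3 1)]), (L3 1)]), (L3 2), (L3 1)]), (L3 2), (L3 2)]), (Br [(L3 3), (Br [(L3 2), (L3 2)]), (L3 2), (L3 1)]), (L3 3), (L3 3), (L3 2), (L3 2)]), (Br [(L3 4), (Br [(L3 3), (Br [(L3 2), (L3 2), (L3 1)]), (L3 2), (L3 1)]), (L3 3), (L3 3), (L3 2), (L3 2)]), (L3 4), (L3 4), (L3 4), (L3 3), (L3 3), (L3 3), (L3 2)])"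

lemma chk_3_3: "chk 2 1 8800 cert_3_3 PL 100000 133 1170400 1"
  by (simp add: cert_3_3_def PL_def)

lemma claim_3_3: "\<forall>N\<ge>8800. theta3 N \<le> 0.00133"
  by (rule claim3[OF chk_3_3]) (simp_all add: power2_eq_square)

definition cert_3_4 :: cert where "cert_3_4 = (Br [(Br [(Br [(L3 5), (Br [(L3 4), (Br [(L3 3), (L3 3), (L3 2)]), (L3 3), (L3 2), (L3 2)]), (L3 4), (L3 3), (L3 3), (L3 2)]), (Br [(Br [(L3 4), (L3 4), (L3 3), (L3 2), (L3 2)]), (L3 4), (L3 4), (L3 3), (L3 2), (L3 2)]), (Br [(L3 4), (L3 4), (L3 3), (L3 3), (L3 2)]), (L3 4), (L3 4), (L3 4), (L3 3), (L3 3), (L3 2)]), (Br [(L3 5), (Br [(Br [(L3 4), (Br [(L3 3), (Br [(Br [(L3 2), (Br [(L3 1), (L3 1)])]), (Br [(Br [(Br [(L3 1), (L3 1)]), (L3 1)]), (L3 1)]), (L3 1)]), (L3 2)]), (L3 3), (L3 2), (L3 1)]), (Br [(Br [(Br [(L3 3), (Br [(L3 2), (Br [(L3 1), (L3 1)])]), (L3 2)]), (Br [(Br [(Br [(L3 2), (Br [(L3 1), (L3 1)])]), (Br [(Br [(L3 1), (L3 1)]), (L3 1)])]), (Br [(Br [(Br [(Br [(Br [(L3 1), (L3 1)]), (L3 1)]), (L3 1)]), (L3 1)]), (L3 1)]), (L3 1)]), (L3 2), (L3 1)]), (Br [(Br [(Br [(Br [(Br [(L3 2), (Br [(L3 1),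 (L3 1)])]), (Br [(Br [(Br [(L3 1), (L3 1)]), (L3 1)]), (L3 1)])]), (L3 2), (L3 1)]), (L3 2), (L3 1)]), (L3 2), (L3 1)]), (L3 2), (L3 2)]), (L3 3), (L3 3), (L3 2), (L3 1)]), (Br [(L3 4), (Br [(L3 3), (Br [(L3 2), (L3 2)]), (L3 2), (L3 1)]), (L3 3), (L3 2), (L3 2)]), (L3 4), (L3 4), (L3 3), (L3 3), (L3 2), (L3 2)]), (Br [(L3 5), (Br [(L3 4), (Br [(L3 3), (Br [(Br [(Br [(L3 2), (L3 2)]), (L3 2), (L3 1)]), (L3 2), (L3 1)]), (L3 2), (L3 1)]), (L3 3), (L3 3), (L3 2)]), (L3 4), (L3 4), (L3 3), (L3 3), (L3 3), (L3 2)]), (Br [(L3 5), (Br [(L3 4), (Br [(L3 3), (Br [(L3 2), (L3 2)]), (L3 2)]), (L3 3), (L3 2), (L3 2)]), (L3 4), (L3 4), (L3 3), (L3 3), (L3 2)]), (L3 5), (L3 5), (L3 5), (L3 4), (L3 4), (L3 4), (L3 3), (L3 3), (L3 3), (L3 2)])"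

lemma chk_3_4: "chk 2 1 150000 cert_3_4 PL 1000000 147 22050000 1"
  by (simp add: cert_3_4_def PL_def)

lemma claim_3_4: "\<forall>N\<ge>150000. theta3 N \<le> 0.000147"
  by (rule claim3[OF chk_3_4]) (simp_all add: power2_eq_square)

definition cert_3_5 :: cert where "cert_3_5 = (Br [(Br [(Br [(L3 6), (Br [(L3 5), (Br [(L3 4), (Br [(L3 3), (L3 3), (L3 2)]), (L3 3), (L3 2)]), (L3 4), (L3 3), (L3 3), (L3 2)]), (L3 5), (L3 4), (L3 4), (L3 3), (L3 3), (L3 2)]), (Br [(Br [(L3 5), (Br [(Br [(L3 4), (L3 4), (L3 3), (L3 2)]), (L3 4), (L3 3), (L3 2), (L3 1)]), (L3 4), (L3 3), (L3 3), (L3 2)]), (L3 5), (L3 5), (L3 4), (L3 4), (L3 3), (L3 2)]), (Br [(L3 5), (L3 5), (L3 4), (L3 4), (L3 3), (L3 2), (L3 2)]), (L3 5), (L3 5), (L3 5), (L3 4), (L3 4), (L3 3), (L3 3), (L3 2)]), (Br [(Br [(Br [(L3 5), (L3 5), (L3 4), (L3 4), (L3 3), (L3 2)]), (L3 5), (L3 5), (L3 4), (L3 4), (L3 3), (L3 2)]), (Br [(Br [(L3 5), (Br [(L3 4), (Br [(L3 3), (Br [(Br [(L3 2), (Br [(L3 1), (L3 1)])]), (Br [(Br [(L3 1), (L3 1)]), (L3 1)])]), (L3 2)]), (L3 3), (L3 2)]), (L3 4), (L3 3), (L3 3), (L3 2)]), (Br [(Br [(L3 4), (Br [(Br [(L3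 3), (Br [(L3 2), (Br [(L3 1), (L3 1)])]), (L3 2)]), (Br [(Br [(L3 2), (Br [(Br [(Br [(L3 1), (L3 1)]), (L3 1)]), (L3 1)])]), (Br [(Br [(Br [(Br [(Br [(L3 1), (L3 1)]), (L3 1)]), (L3 1)]), (L3 1)]), (L3 1)]), (L3 1)]), (L3 2), (L3 1)]), (L3 3), (L3 2)]), (Br [(Br [(Br [(Br [(L3 3), (Br [(L3 2), (Br [(L3 1), (L3 1)])]), (L3 2)]), (Br [(Br [(L3 2), (Br [(Br [(L3 1), (L3 1)]), (L3 1)])]), (Br [(Br [(Br [(Br [(L3 1), (L3 1)]), (L3 1)]), (L3 1)]), (L3 1)]), (L3 1)]), (L3 2)]), (Br [(Br [(Br [(Br [(L3 2), (Br [(L3 1), (L3 1)])]), (Br [(Br [(Br [(Br [(Br [(L3 1), (L3 1)]), (L3 1)]), (L3 1)]), (L3 1)]), (L3 1)])]), (Br [(Br [(Br [(Br [(Br [(Br [(Br [(L3 1), (L3 1)]), (L3 1)]), (L3 1)]), (L3 1)]), (L3 1)]), (L3 1)]), (L3 1)]), (L3 1)]), (Br [(Br [(Br [(Br [(Br [(Br [(Br [(Br [(Br [(L3 1), (L3 1)]), (L3 1)]), (L3 1)]), (L3 1)]), (L3 1)]), (L3 1)]), (L3 1)]), (L3 1)]), (L3 1)]), (L3 1)]), (L3 2), (L3 1)]), (Br [(Br [(Br [(Br [(Br [(Br [(L3 2), (Br [(L3 1), (L3 1)])]), (Br [(Br [(L3 1), (L3 1)]), (L3 1)])]), (Br [(Br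 [(Br [(Br [(Br [(Br [(L3 1), (L3 1)]), (L3 1)]), (L3 1)]), (L3 1)]), (L3 1)]), (L3 1)]), (L3 1)]), (Br [(Br [(Br [(Br [(Br [(Br [(Br [(Br [(Br [(L3 1), (L3 1)]), (L3 1)]), (L3 1)]), (L3 1)]), (L3 1)]), (L3 1)]), (L3 1)]), (L3 1)]), (L3 1)]), (L3 1)]), (L3 2), (L3 1)]), (L3 2), (L3 1)]), (L3 2), (L3 1)]), (L3 3), (L3 3), (L3 2)]), (L3 4), (L3 4), (L3 3), (L3 3), (L3 2)]), (Br [(L3 5), (Br [(L3 4), (Br [(L3 3), (Br [(Br [(L3 2), (L3 2)]), (L3 2), (L3 1)]), (L3 2)]), (L3 3), (L3 2), (L3 2)]), (L3 4), (L3 3), (L3 3), (L3 2)]), (L3 5), (L3 5), (L3 4), (L3 4), (L3 4), (L3 3), (L3 3), (L3 2)]), (Br [(Br [(Br [(L3 5), (L3 5), (L3 4), (L3 3), (L3 3), (L3 2)]), (L3 5), (L3 5), (L3 4), (L3 3), (L3 3), (L3 2)]), (Br [(L3 5), (Br [(L3 4), (Br [(Br [(L3 3), (Br [(Br [(L3 2), (Br [(L3 1), (L3 1)])]), (Br [(Br [(L3 1), (L3 1)]), (L3 1)])]), (L3 2)]), (Br [(Br [(Br [(L3 2), (Br [(Br [(L3 1), (L3 1)]), (L3 1)])]), (L3 2), (L3 1)]), (L3 2), (L3 1)]), (L3 2), (L3 1)]), (L3 3), (L3 2), (L3 2)]), (L3 4), (L3 4), (L3 3), (L3 2), (L3 2)]),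 (L3 5), (L3 5), (L3 5), (L3 4), (L3 4), (L3 3), (L3 3), (L3 2)]), (Br [(Br [(L3 5), (L3 5), (L3 4), (L3 4), (L3 3), (L3 3), (L3 2)]), (Br [(L3 5), (Br [(L3 4), (Br [(L3 3), (Br [(L3 2), (L3 2)]), (L3 2)]), (L3 3), (L3 2), (L3 1)]), (L3 4), (L3 3), (L3 3), (L3 2)]), (L3 5), (L3 5), (L3 4), (L3 4), (L3 3), (L3 3), (L3 3)]), (Br [(Br [(L3 5), (L3 5), (L3 4), (L3 4), (L3 3), (L3 2)]), (L3 5), (L3 5), (L3 4), (L3 4), (L3 4), (L3 3), (L3 3), (L3 2)]), (Br [(L3 5), (L3 5), (L3 5), (L3 4), (L3 4), (L3 3), (L3 3), (L3 2)]), (Br [(L3 5), (L3 5), (L3 4), (L3 4), (L3 3), (L3 3), (L3 3)]), (L3 5), (L3 5), (L3 5), (L3 5), (L3 4), (L3 4), (L3 4), (L3 3), (L3 3), (L3 3)])"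

lemma chk_3_5: "chk 2 1 2700000 cert_3_5 PL 200000 3 8100000 1"
  by (simp add: cert_3_5_def PL_def)

lemma claim_3_5: "\<forall>N\<ge>2700000. theta3 N \<le> 0.000015"
  by (rule claim3[OF chk_3_5]) (simp_all add: power2_eq_square)

definition cert_3_6 :: cert where "cert_3_6 = (L3 9)"

lemma chk_3_6: "chk 2 1 63000000 cert_3_6 PL 200000 3 189000000 1"
  by (simp add: cert_3_6_def PL_def)

lemma claim_3_6: "\<forall>N\<ge>63000000. theta3 N \<le> 0.000015"
  by (rule claim3[OF chk_3_6]) (simp_all add: power2_eq_square)



lemma GG_le_4: assumes "0 < N" "1 \<le> e" "K \<le> 4"
  shows "GG K e N \<le> 4 ^ card (prime_factors N) / real N"
proof -
  have "GG K e N \<le> real K ^ card (prime_factors N) / (real N * PP N)" by (rule GG_le[OF assms(1,2)])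
  also have "\<dots> \<le> real K ^ card (prime_factors N) / real N"
    using PP_ge1[of N] assms(1) by (intro divide_left_mono) (auto intro: mult_pos_pos)
  also have "\<dots> \<le> 4 ^ card (prime_factors N) / real N"
    using assms(3) by (intro divide_right_mono power_mono) auto
  finally show ?thesis .
qed

lemma sqrt_prod: "finite A \<Longrightarrow> sqrt (\<Prod>x\<in>A. g x) = (\<Prod>x\<in>A. sqrt (g x))"
  by (induction A rule: finite_induct) (auto simp: real_sqrt_mult)

lemma four_omega: assumes N: "0 < N"
  shows "(4::real) ^ card (prime_factors N) \<le> 3 ^ 16 * sqrt (real N)"
proof -
  let ?A = "prime_factors N"
  let ?f = "\<lambda>p::nat. if p < 16 then (3::real) else 1"
  have fin: "finite ?A" by simp
  have "(4::real) ^ card ?A = (\<Prod>p\<in>?A. 4)" by simp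
  also have "\<dots> \<le> (\<Prod>p\<in>?A. ?f p * sqrt (real p))"
  proof (rule prod_mono, rule conjI)
    fix p assume p: "p \<in> ?A"
    then have p2: "p \<ge> 2" by (auto dest: in_prime_factors_imp_prime prime_ge_2_nat)
    show "(0::real) \<le> 4" by simp
    show "(4::real) \<le> ?f p * sqrt (real p)"
    proof (cases "p < 16")
      case True
      have a: "sqrt 2 \<le> sqrt (real p)" using p2 by simp
      have b: "(4/3::real) \<le> sqrt 2"
        by (rule real_le_rsqrt) (simp add: power2_eq_square)
      have "4 \<le> 3 * sqrt (real p)" using a b by linarith
      then show ?thesis using True by simp
    next
      case False
      have "4 \<le> sqrt (real p)" by (rule real_le_rsqrt) (use False in simp)
      then show ?thesis using False by simp
    qed
  qed
  also have "\<dots> = (\<Prod>p\<in>?A. ?f p) * (\<Prod>p\<in>?A. sqrt (real p))"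
    by (simp add: prod.distrib)
  also have "\<dots> \<le> 3 ^ 16 * sqrt (real N)"
  proof (rule mult_mono)
    have "(\<Prod>p\<in>?A. ?f p) = (\<Prod>p\<in>?A \<inter> {..<16}. 3)"
      by (subst prod.inter_restrict[OF fin]) (rule prod.cong, auto)
    also have "\<dots> = 3 ^ card (?A \<inter> {..<16})" by simp
    also have "\<dots> \<le> 3 ^ 16"
    proof (rule power_increasing)
      have "card (?A \<inter> {..<16}) \<le> card {..<(16::nat)}" by (rule card_mono) auto
      then show "card (?A \<inter> {..<16}) \<le> 16" by simp
    qed simp
    finally show "(\<Prod>p\<in>?A. ?f p) \<le> 3 ^ 16" .
    have "(\<Prod>p\<in>?A. sqrt (real p)) = sqrt (real (\<Prod>p\<in>?A. p))"
      by (simp add: sqrt_prod of_nat_prod)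
    also have "\<dots> \<le> sqrt (real N)" using prod_pf_le[OF N] by (simp del: of_nat_prod)
    finally show "(\<Prod>p\<in>?A. sqrt (real p)) \<le> sqrt (real N)" .
  qed (auto intro: prod_nonneg)
  finally show ?thesis .
qed

lemma GG_bound: assumes "0 < N" "1 \<le> e" "K \<le> 4"
  shows "GG K e N \<le> 3 ^ 16 / sqrt (real N)"
proof -
  have "GG K e N \<le> 4 ^ card (prime_factors N) / real N" by (rule GG_le_4[OF assms])
  also have "\<dots> \<le> 3 ^ 16 * sqrt (real N) / real N"
    using four_omega[OF assms(1)] assms(1) by (intro divide_right_mono) auto
  also have "\<dots> = 3 ^ 16 / sqrt (real N)"
    using assms(1) by (simp add: field_simps real_div_sqrt)
  finally show ?thesis .
qed

lemma GG_tendsto: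
  assumes "1 \<le> e" "K \<le> 4"
  shows "(\<lambda>N. GG K e N) \<longlonglongrightarrow> 0"
proof (rule tendsto_sandwich[of "\<lambda>_. 0" _ _ "\<lambda>N. 3 ^ 16 / sqrt (real N)"])
  show "\<forall>\<^sub>F n in sequentially. 0 \<le> GG K e n" by (simp add: GG_nonneg)
  show "\<forall>\<^sub>F n in sequentially. GG K e n \<le> 3 ^ 16 / sqrt (real n)"
    using eventually_gt_at_top[of 0] by eventually_elim (use GG_bound assms in auto)
  have "filterlim (\<lambda>N. sqrt (real N)) at_top sequentially"
    by (rule filterlim_compose[OF sqrt_at_top filterlim_real_sequentially])
  then have "filterlim (\<lambda>N. sqrt (real N)) at_infinity sequentially"
    by (rule filterlim_at_top_imp_at_infinity)
  then show "(\<lambda>N. 3 ^ 16 / sqrt (real N) :: real) \<longlonglongrightarrow> 0"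
    by (rule tendsto_divide_0[OF tendsto_const])
qed simp

lemma sqrt_tendsto:
  assumes "(\<lambda>N. f N ^ 2) \<longlonglongrightarrow> 0" "\<And>N. 0 \<le> (f N :: real)"
  shows "f \<longlonglongrightarrow> 0"
proof -
  have "(\<lambda>N. sqrt (f N ^ 2)) \<longlonglongrightarrow> sqrt 0" by (rule tendsto_real_sqrt[OF assms(1)])
  then show ?thesis using assms(2) by simp
qed


theorem lemma3p1:
  shows "theta1 \<longlonglongrightarrow> 0 \<and> theta2 \<longlonglongrightarrow> 0 \<and> theta3 \<longlonglongrightarrow> 0
    \<and> (\<forall>N\<ge>1. theta1 N \<le> 1.00 \<and> theta2 N \<le> 1.34 \<and> theta3 N \<le> 1.00)
    \<and> (\<forall>N\<ge>43. theta1 N \<le> 0.465 \<and> theta2 N \<le> 0.445 \<and> theta3 N \<le> 0.0556)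
    \<and> (\<forall>N\<ge>571. theta1 N \<le> 0.257 \<and> theta2 N \<le> 0.149 \<and> theta3 N \<le> 0.00926)
    \<and> (\<forall>N\<ge>8800. theta1 N \<le> 0.133 \<and> theta2 N \<le> 0.0424 \<and> theta3 N \<le> 0.00133)
    \<and> (\<forall>N\<ge>150000. theta1 N \<le> 0.0607 \<and> theta2 N \<le> 0.00941 \<and> theta3 N \<le> 0.000147)
    \<and> (\<forall>N\<ge>2700000. theta1 N \<le> 0.0265 \<and> theta2 N \<le> 0.00189 \<and> theta3 N \<le> 0.000015)
    \<and> (\<forall>N\<ge>63000000. theta1 N \<le> 0.0106 \<and> theta2 N \<le> 0.000314 \<and> theta3 N \<le> 0.000015)"
proof -
  have l3: "theta3 \<longlonglongrightarrow> 0"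
    using GG_tendsto[of 1 2] by (simp add: theta3_GG[abs_def])
  have l2: "theta2 \<longlonglongrightarrow> 0"
    using GG_tendsto[of 1 4] by (simp add: theta2_GG[abs_def])
  have "(\<lambda>N. GG 4 2 N) \<longlonglongrightarrow> 0" using GG_tendsto[of 2 4] by simp
  moreover have "\<forall>\<^sub>F N in sequentially. GG 4 2 N = theta1 N ^ 2"
    using eventually_gt_at_top[of 0] by eventually_elim (simp add: theta1_GG)
  ultimately have "(\<lambda>N. theta1 N ^ 2) \<longlonglongrightarrow> 0" by (rule tendsto_cong[THEN iffD1, rotated])
  then have l1: "theta1 \<longlonglongrightarrow> 0" by (rule sqrt_tendsto) (rule theta1_nonneg)
  have c0: "\<forall>N\<ge>1. theta1 N \<le> 1.00 \<and> theta2 N \<le> 1.34 \<and> theta3 N \<le> 1.00"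
    using claim_1_0 claim_2_0 claim_3_0 by blast
  have c1: "\<forall>N\<ge>43. theta1 N \<le> 0.465 \<and> theta2 N \<le> 0.445 \<and> theta3 N \<le> 0.0556"
    using claim_1_1 claim_2_1 claim_3_1 by blast
  have c2: "\<forall>N\<ge>571. theta1 N \<le> 0.257 \<and> theta2 N \<le> 0.149 \<and> theta3 N \<le> 0.00926"
    using claim_1_2 claim_2_2 claim_3_2 by blast
  have c3: "\<forall>N\<ge>8800. theta1 N \<le> 0.133 \<and> theta2 N \<le> 0.0424 \<and> theta3 N \<le> 0.00133"
    using claim_1_3 claim_2_3 claim_3_3 by blast
  have c4: "\<forall>N\<ge>150000. theta1 N \<le> 0.0607 \<and> theta2 N \<le> 0.00941 \<and> theta3 N \<le> 0.000147"
    using claim_1_4 claim_2_4 claim_3_4 by blast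
  have c5: "\<forall>N\<ge>2700000. theta1 N \<le> 0.0265 \<and> theta2 N \<le> 0.00189 \<and> theta3 N \<le> 0.000015"
    using claim_1_5 claim_2_5 claim_3_5 by blast
  have c6: "\<forall>N\<ge>63000000. theta1 N \<le> 0.0106 \<and> theta2 N \<le> 0.000314 \<and> theta3 N \<le> 0.000015"
    using claim_1_6 claim_2_6 claim_3_6 by blast
  show ?thesis
    by (intro conjI l1 l2 l3 c0 c1 c2 c3 c4 c5 c6)
qed


end
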